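(* Let $n\geq 1$ and $t_i,p_i\in\mathbb{N}_{\geq 0}$ for $1\leq i\leq n$, and set $X=\bigcup_{i=1}^n(t_i+\mathbb{N}_{\geq 0}\cdot p_i)$, where $\mathbb{N}_{\geq 0}\cdot p_i=\{x\cdot p_i\mid x\in\mathbb{N}_{\geq 0}\}$. If there exists $T\geq 0$ such that $\{x\in\mathbb{N}_{\geq 0}\mid x\geq T\}\subseteq X$, then with $T_{\max}=\max\{t_i\mid 1\leq i\leq n\}$ we have $\{x\in\mathbb{N}_{\geq 0}\mid x\geq T_{\max}\}\subseteq X$. *)

theory Defs
  imports Main
begin

end

theory Submission
  imports Defs
begin

theorem lemma19:
  fixes n :: nat and t p :: "nat \<Rightarrow> nat" and X :: "nat set"
  assumes "n \<ge> 1"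
    and "X = (\<Union>i\<in>{1..n}. {t i + x * p i | x. True})"
    and "\<exists>T. {x. x \<ge> T} \<subseteq> X"
  shows "{x. x \<ge> Max {t i | i. i \<in> {1..n}}} \<subseteq> X"
proof
  fix x assume "x \<in> {x. x \<ge> Max {t i | i. i \<in> {1..n}}}"
  hence xM: "x \<ge> Max {t i | i. i \<in> {1..n}}" by simp
  have fin: "finite {t i | i. i \<in> {1..n}}" by simp
  have tle: "t i \<le> x" if "i \<in> {1..n}" for i
    using Max_ge[OF fin, of "t i"] that xM by fastforce
  obtain T where T: "{x. x \<ge> T} \<subseteq> X" using assms(3) by blast
  define L where "L = (\<Prod>i\<in>{1..n}. if p i = 0 then 1 else p i)"
  have Lpos: "L \<ge> 1" unfolding L_def by (simp add: Suc_le_eq)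
  have dvdL: "p i dvd L" if "i \<in> {1..n}" "p i > 0" for i
  proof -
    have "(if p i = 0 then 1 else p i) dvd L" unfolding L_def
      by (rule dvd_prodI) (use that in auto)
    thus ?thesis using that by simp
  qed
  define k where "k = T + 1"
  have "x + k * L \<ge> T" using Lpos unfolding k_def
    by (metis le_add1 mult_le_mono2 mult_1_right order_trans trans_le_add2)
  hence "x + k * L \<in> X" using T by blast
  then obtain i y where i: "i \<in> {1..n}" and e: "x + k * L = t i + y * p i"
    using assms(2) by blast
  have ti: "t i \<le> x" using tle i by blast
  have kL: "k * L > 0" using Lpos unfolding k_def by simp
  have pp: "p i > 0"
  proof (rule ccontr)
    assume "\<not> p i > 0" hence "p i = 0" by simp
    with e ti kL show False by simp
  qed
  obtain c where c: "L = p i * c" using dvdL[OF i pp] by blast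
  have "x - t i = (y - k * c) * p i" using e ti c
    by (simp add: diff_mult_distrib algebra_simps)
  hence "x = t i + (y - k * c) * p i" using ti by simp
  thus "x \<in> X" using assms(2) i by blast
qed

end
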